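(* Let $\mu$ be a probability measure on $\mathbb{R}$ having an atom, i.e. $\mu(\{x\})>0$ for some $x\in\mathbb{R}$. Let $k\ge1$ and let $X_1,X_2,\dots$ be i.i.d. $k\times k$ random matrices whose entries are i.i.d. with law $\mu$, and $A_n=X_1X_2\cdots X_n$. Then $\lim_{n\to\infty}\Pr(A_n\text{ has all eigenvalues real})=1$. *)

theory Defs
  imports "HOL-Probability.Probability" "Jordan_Normal_Form.Char_Poly"
begin

definition entry_matrix :: "nat \<Rightarrow> (nat \<Rightarrow> nat \<Rightarrow> nat \<Rightarrow> 'w \<Rightarrow> real) \<Rightarrow> nat \<Rightarrow> 'w \<Rightarrow> real mat" where
  "entry_matrix k E m \<omega> = mat k k (\<lambda>(i, j). E m i j \<omega>)"

fun prod_matrix :: "nat \<Rightarrow> (nat \<Rightarrow> real mat) \<Rightarrow> nat \<Rightarrow> real mat" where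
  "prod_matrix k X 0 = 1\<^sub>m k"
| "prod_matrix k X (Suc n) = prod_matrix k X n * X (Suc n)"

definition all_eigenvalues_real :: "real mat \<Rightarrow> bool" where
  "all_eigenvalues_real A \<longleftrightarrow>
     (\<forall>z. eigenvalue (map_mat complex_of_real A) z \<longrightarrow> z \<in> \<real>)"

end

theory Submission
  imports Defs
begin


lemma real_mat_vec:
  fixes A :: "complex mat" and v :: "complex vec"
  assumes "A \<in> carrier_mat k k" "v \<in> carrier_vec k"
    and "\<And>i j. i < k \<Longrightarrow> j < k \<Longrightarrow> A $$ (i,j) \<in> \<real>"
    and "\<And>i. i < k \<Longrightarrow> v $ i \<in> \<real>"
    and "i < k"
  shows "(A *\<^sub>v v) $ i \<in> \<real>"
  using assms by (auto simp: mult_mat_vec_def scalar_prod_def intro!: sum_in_Reals Reals_mult)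

lemma rank_one_eig:
  fixes P Q :: "complex mat" and c l :: complex
  assumes P: "P \<in> carrier_mat k k" and Q: "Q \<in> carrier_mat k k"
    and Pr: "\<And>i j. i < k \<Longrightarrow> j < k \<Longrightarrow> P $$ (i,j) \<in> \<real>"
    and Qr: "\<And>i j. i < k \<Longrightarrow> j < k \<Longrightarrow> Q $$ (i,j) \<in> \<real>"
    and cr: "c \<in> \<real>"
    and ev: "eigenvalue (P * mat k k (\<lambda>_. c) * Q) l"
  shows "l \<in> \<real>"
proof -
  define J where "J = mat k k (\<lambda>_. c)"
  define one where "one = vec k (\<lambda>_. 1::complex)"
  have J: "J \<in> carrier_mat k k" by (simp add: J_def)
  have Jv: "J *\<^sub>v u = (c * (\<Sum>j<k. u $ j)) \<cdot>\<^sub>v one" if u: "u \<in> carrier_vec k" for u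
    using u by (intro eq_vecI) (auto simp: J_def one_def mult_mat_vec_def scalar_prod_def sum_distrib_left atLeast0LessThan)
  define r where "r = P *\<^sub>v one"
  have r: "r \<in> carrier_vec k" using P by (simp add: r_def one_def)
  have Mv: "(P * J * Q) *\<^sub>v u = (c * (\<Sum>j<k. (Q *\<^sub>v u) $ j)) \<cdot>\<^sub>v r" if u: "u \<in> carrier_vec k" for u
  proof -
    have "(P * J * Q) *\<^sub>v u = (P * J) *\<^sub>v (Q *\<^sub>v u)"
      using P J Q u by (meson assoc_mult_mat_vec mult_carrier_mat)
    also have "\<dots> = P *\<^sub>v (J *\<^sub>v (Q *\<^sub>v u))"
      using P J Q u by (meson assoc_mult_mat_vec mult_mat_vec_carrier)
    also have "\<dots> = P *\<^sub>v ((c * (\<Sum>j<k. (Q *\<^sub>v u) $ j)) \<cdot>\<^sub>v one)"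
      using Q u by (simp add: Jv)
    also have "\<dots> = (c * (\<Sum>j<k. (Q *\<^sub>v u) $ j)) \<cdot>\<^sub>v r"
      unfolding r_def using P by (intro mult_mat_vec) (auto simp: one_def)
    finally show ?thesis .
  qed
  from ev obtain w where w: "w \<in> carrier_vec k" "w \<noteq> 0\<^sub>v k" "(P * J * Q) *\<^sub>v w = l \<cdot>\<^sub>v w"
    using P Q unfolding eigenvalue_def eigenvector_def J_def by auto
  show "l \<in> \<real>"
  proof (cases "l = 0")
    case True then show ?thesis by simp
  next
    case l0: False
    define s where "s = c * (\<Sum>j<k. (Q *\<^sub>v w) $ j)"
    have ws: "l \<cdot>\<^sub>v w = s \<cdot>\<^sub>v r" using w Mv[OF w(1)] by (simp add: s_def)
    have wr: "w = (s / l) \<cdot>\<^sub>v r"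
    proof (rule eq_vecI)
      fix i assume i: "i < dim_vec ((s / l) \<cdot>\<^sub>v r)"
      have "l * w $ i = s * r $ i" using arg_cong[OF ws, of "\<lambda>v. v $ i"] i r w(1) by auto
      then show "w $ i = ((s / l) \<cdot>\<^sub>v r) $ i" using i l0 by (auto simp: field_simps)
    qed (use w r in auto)
    have s0: "s \<noteq> 0" using wr w(2) r by auto
    have r0: "r \<noteq> 0\<^sub>v k" using wr w(2) r by auto
    then obtain i where i: "i < k" "r $ i \<noteq> 0" using r by (metis eq_vecI carrier_vecD index_zero_vec(1) index_zero_vec(2))
    define d where "d = c * (\<Sum>j<k. (Q *\<^sub>v r) $ j)"
    have "(P * J * Q) *\<^sub>v w = (s / l) \<cdot>\<^sub>v ((P * J * Q) *\<^sub>v r)"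
      unfolding wr using P J Q r by (intro mult_mat_vec) auto
    also have "\<dots> = (s / l) \<cdot>\<^sub>v (d \<cdot>\<^sub>v r)" using Mv[OF r] by (simp add: d_def)
    finally have "s \<cdot>\<^sub>v r = (s / l) \<cdot>\<^sub>v (d \<cdot>\<^sub>v r)" using w(3) ws by simp
    from arg_cong[OF this, of "\<lambda>v. v $ i"] i r have "s * r $ i = (s / l) * (d * r $ i)" by auto
    with i s0 l0 have ld: "l = d" by (auto simp: field_simps)
    have rr: "r $ j \<in> \<real>" if "j < k" for j
      unfolding r_def using P that by (intro real_mat_vec[of _ k]) (auto simp: one_def Pr)
    have "d \<in> \<real>" unfolding d_def using cr
      by (intro Reals_mult sum_in_Reals real_mat_vec[OF Q r] Qr rr) auto
    then show ?thesis using ld by simp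
  qed
qed

lemma prod_carrier: "(\<And>m. X m \<in> carrier_mat k k) \<Longrightarrow> prod_matrix k X n \<in> carrier_mat k k"
  by (induction n) auto

lemma prod_split:
  assumes X: "\<And>m. X m \<in> carrier_mat k k" and m: "1 \<le> m" "m \<le> n"
  shows "\<exists>Q \<in> carrier_mat k k. prod_matrix k X n = prod_matrix k X (m - 1) * X m * Q"
  using m
proof (induction n)
  case 0 then show ?case by simp
next
  case (Suc n)
  show ?case
  proof (cases "m = Suc n")
    case True
    have "prod_matrix k X n * X (Suc n) \<in> carrier_mat k k" using X[of "Suc n"] prod_carrier[of X k n] X by (meson mult_carrier_mat)
    then show ?thesis using True by (intro bexI[of _ "1\<^sub>m k"]) auto
  next
    case False
    with Suc obtain Q where Q: "Q \<in> carrier_mat k k" "prod_matrix k X n = prod_matrix k X (m - 1) * X m * Q" by auto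
    have "prod_matrix k X (Suc n) = prod_matrix k X (m - 1) * X m * (Q * X (Suc n))"
      using Q(2) assoc_mult_mat[of "prod_matrix k X (m - 1) * X m" k k Q k "X (Suc n)" k] Q(1) X[of m] X[of "Suc n"] prod_carrier[of X k "m - 1", OF X]
      by (metis mult_carrier_mat prod_matrix.simps(2))
    then show ?thesis using Q X by auto
  qed
qed

lemma all_real_of_const_factor:
  assumes X: "\<And>m. X m \<in> carrier_mat k k" and m: "1 \<le> m" "m \<le> n"
    and Xm: "X m = mat k k (\<lambda>_. x)"
  shows "all_eigenvalues_real (prod_matrix k X n)"
proof -
  obtain Q where Q: "Q \<in> carrier_mat k k" "prod_matrix k X n = prod_matrix k X (m - 1) * X m * Q"
    using prod_split[of X k m n] X m by blast
  define P where "P = prod_matrix k X (m - 1)"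
  have P: "P \<in> carrier_mat k k" unfolding P_def using X by (rule prod_carrier)
  have eq: "map_mat complex_of_real (prod_matrix k X n) =
    map_mat complex_of_real P * mat k k (\<lambda>_. complex_of_real x) * map_mat complex_of_real Q"
  proof -
    have "map_mat complex_of_real (P * X m * Q) = map_mat complex_of_real (P * X m) * map_mat complex_of_real Q"
      using P Q X by (intro of_real_hom.mat_hom_mult[of _ k k]) auto
    also have "map_mat complex_of_real (P * X m) = map_mat complex_of_real P * map_mat complex_of_real (X m)"
      using P X by (intro of_real_hom.mat_hom_mult[of _ k k]) auto
    also have "map_mat complex_of_real (X m) = mat k k (\<lambda>_. complex_of_real x)"
      unfolding Xm by (intro eq_matI) auto
    finally show ?thesis using Q by (simp add: P_def)
  qed
  show ?thesis unfolding all_eigenvalues_real_def eq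
  proof (intro allI impI)
    fix z assume "eigenvalue (map_mat complex_of_real P * mat k k (\<lambda>_. complex_of_real x) * map_mat complex_of_real Q) z"
    then show "z \<in> \<real>"
      by (rule rank_one_eig[rotated 5]) (use P Q in auto)
  qed
qed



definition inK :: "nat \<Rightarrow> complex \<Rightarrow> bool" where
  "inK N z \<longleftrightarrow> \<bar>Re z\<bar> \<le> real N \<and> \<bar>Im z\<bar> \<le> real N \<and> 1 / real (Suc N) \<le> \<bar>Im z\<bar>"

lemma compact_inK: "compact {z. inK N z}"
proof -
  have "{z. inK N z} \<subseteq> cball 0 (2 * real N)"
  proof
    fix z assume "z \<in> {z. inK N z}"
    then show "z \<in> cball 0 (2 * real N)" using cmod_le[of z] by (simp add: inK_def)
  qed
  then have "bounded {z. inK N z}" using bounded_cball bounded_subset by blast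
  moreover have "closed {z. inK N z}" unfolding inK_def
    by (intro closed_Collect_conj closed_Collect_le continuous_intros)
  ultimately show ?thesis by (simp add: compact_eq_bounded_closed)
qed

definition cq :: "rat \<times> rat \<Rightarrow> complex" where
  "cq q = Complex (of_rat (fst q)) (of_rat (snd q))"

lemma nonreal_root_iff:
  fixes g :: "complex \<Rightarrow> complex" assumes cont: "continuous_on UNIV g"
  shows "(\<exists>z. Im z \<noteq> 0 \<and> g z = 0) \<longleftrightarrow>
    (\<exists>N::nat. \<forall>j::nat. \<exists>q::rat\<times>rat. inK N (cq q) \<and> norm (g (cq q)) < 1 / real (Suc j))"
proof
  assume "\<exists>N::nat. \<forall>j::nat. \<exists>q::rat\<times>rat. inK N (cq q) \<and> norm (g (cq q)) < 1 / real (Suc j)"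
  then obtain N where "\<forall>j::nat. \<exists>q::rat\<times>rat. inK N (cq q) \<and> norm (g (cq q)) < 1 / real (Suc j)" by blast
  then obtain q where q: "\<And>j. inK N (cq (q j)) \<and> norm (g (cq (q j))) < 1 / real (Suc j)" by metis
  define f where "f j = cq (q j)" for j
  have "\<forall>j. f j \<in> {z. inK N z}" using q by (simp add: f_def)
  then obtain l r where l: "l \<in> {z. inK N z}" and r: "strict_mono r" and lim: "(f \<circ> r) \<longlonglongrightarrow> l"
    using compact_imp_seq_compact[OF compact_inK] unfolding seq_compact_def by metis
  have "isCont g l" using cont continuous_on_eq_continuous_at by blast
  then have lim1: "(\<lambda>j. g ((f \<circ> r) j)) \<longlonglongrightarrow> g l" using lim isCont_tendsto_compose by blast
  have "(\<lambda>j. g ((f \<circ> r) j)) \<longlonglongrightarrow> 0"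
  proof (rule Lim_null_comparison)
    show "\<forall>\<^sub>F j in sequentially. norm (g ((f \<circ> r) j)) \<le> 1 / real (Suc j)"
    proof (intro always_eventually allI)
      fix j
      have "norm (g ((f \<circ> r) j)) \<le> 1 / real (Suc (r j))" using q[of "r j"] by (simp add: f_def)
      also have "\<dots> \<le> 1 / real (Suc j)" using seq_suble[OF r, of j]
        by (intro divide_left_mono) auto
      finally show "norm (g ((f \<circ> r) j)) \<le> 1 / real (Suc j)" .
    qed
    show "(\<lambda>j. 1 / real (Suc j)) \<longlonglongrightarrow> 0" using LIMSEQ_inverse_real_of_nat by (simp add: inverse_eq_divide)
  qed
  with lim1 have "g l = 0" using LIMSEQ_unique by blast
  moreover have "Im l \<noteq> 0" using l unfolding inK_def
    by (smt (verit) divide_pos_pos mem_Collect_eq of_nat_0_less_iff zero_less_Suc)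
  ultimately show "\<exists>z. Im z \<noteq> 0 \<and> g z = 0" by blast
next
  assume "\<exists>z. Im z \<noteq> 0 \<and> g z = 0"
  then obtain z where z: "Im z \<noteq> 0" "g z = 0" by blast
  define t where "t = \<bar>Im z\<bar>"
  have t: "t > 0" using z by (simp add: t_def)
  obtain N :: nat where N: "real N > \<bar>Re z\<bar> + \<bar>Im z\<bar> + 1 + 2 / t"
    using reals_Archimedean2 by blast
  have N1: "1 / real (Suc N) \<le> t / 2"
  proof -
    have "2 / t < real (Suc N)" using N t by simp
    then have "2 < real (Suc N) * t" using t by (simp add: field_simps)
    then show ?thesis using t by (simp add: field_simps)
  qed
  show "\<exists>N::nat. \<forall>j::nat. \<exists>q::rat\<times>rat. inK N (cq q) \<and> norm (g (cq q)) < 1 / real (Suc j)"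
  proof (intro exI[of _ N] allI)
    fix j :: nat
    have "isCont g z" using cont continuous_on_eq_continuous_at by blast
    then obtain d where d: "d > 0" "\<And>w. dist w z < d \<Longrightarrow> dist (g w) (g z) < 1 / real (Suc j)"
      unfolding continuous_at_eps_delta by (metis of_nat_0_less_iff zero_less_Suc zero_less_divide_1_iff)
    define e where "e = min d (min 1 (t / 2))"
    have e: "e > 0" using d t by (simp add: e_def)
    obtain a where a: "a \<in> \<rat>" "Re z - e / 2 < a" "a < Re z + e / 2"
      using Rats_dense_in_real[of "Re z - e/2" "Re z + e/2"] e by auto
    obtain b where b: "b \<in> \<rat>" "Im z - e / 2 < b" "b < Im z + e / 2"
      using Rats_dense_in_real[of "Im z - e/2" "Im z + e/2"] e by auto
    obtain a' where a': "a = of_rat a'" using a(1) Rats_cases by blast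
    obtain b' where b': "b = of_rat b'" using b(1) Rats_cases by blast
    have cqe: "cq (a', b') = Complex a b" by (simp add: cq_def a' b')
    have "dist (Complex a b) z \<le> \<bar>Re (Complex a b - z)\<bar> + \<bar>Im (Complex a b - z)\<bar>"
      unfolding dist_norm by (rule cmod_le)
    also have "\<dots> < e" using a b by simp
    finally have "dist (Complex a b) z < d" unfolding e_def by simp
    then have "norm (g (Complex a b)) < 1 / real (Suc j)" using d(2) z(2) by (simp add: dist_norm)
    moreover have "inK N (Complex a b)"
    proof -
      have e1: "e \<le> 1" "e \<le> t / 2" by (auto simp: e_def)
      have "2 / t > 0" using t by simp
      then have N2: "real N > \<bar>Re z\<bar> + t + 1" using N unfolding t_def by linarith
      have "\<bar>a\<bar> \<le> real N" using a(2,3) e1 N2 t by (simp add: abs_le_iff) linarith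
      moreover have "\<bar>b\<bar> \<le> real N" using b(2,3) e1 N2 t unfolding t_def by (simp add: abs_le_iff) linarith
      moreover have "t / 2 \<le> \<bar>b\<bar>" using b(2,3) e1 t unfolding t_def by (simp add: abs_le_iff abs_if split: if_splits)
      ultimately show ?thesis using N1 by (simp add: inK_def)
    qed
    ultimately show "\<exists>q::rat\<times>rat. inK N (cq q) \<and> norm (g (cq q)) < 1 / real (Suc j)"
      using cqe by metis
  qed
qed



definition G :: "nat \<Rightarrow> real mat \<Rightarrow> complex \<Rightarrow> complex" where
  "G k A z = (\<Sum>p\<in>{p. p permutes {0..<k}}. signof p *
      (\<Prod>i=0..<k. (complex_of_real (A $$ (i, p i)) - of_bool (i = p i) * z)))"

lemma eig_iff_G:
  assumes A: "A \<in> carrier_mat k k"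
  shows "eigenvalue (map_mat complex_of_real A) z \<longleftrightarrow> G k A z = 0"
proof -
  have C: "map_mat complex_of_real A \<in> carrier_mat k k" using A by simp
  have h: "char_matrix (map_mat complex_of_real A) z $$ (i, p i) =
      complex_of_real (A $$ (i, p i)) - of_bool (i = p i) * z"
    if p: "p permutes {0..<k}" and i: "i < k" for p i
  proof -
    have "p i < k" using p i permutes_in_image by fastforce
    then show ?thesis using i A by (auto simp: char_matrix_def)
  qed
  have "det (char_matrix (map_mat complex_of_real A) z) = G k A z"
    unfolding det_def'[OF char_matrix_closed[OF C]] G_def
    by (intro sum.cong refl arg_cong2[where f=times] prod.cong) (auto simp: h)
  then show ?thesis using eigenvalue_det[OF C] by simp
qed

lemma cont_G: "continuous_on UNIV (G k A)"
  unfolding G_def by (intro continuous_intros)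

lemma meas_G:
  assumes "\<And>i j. i < k \<Longrightarrow> j < k \<Longrightarrow> (\<lambda>\<omega>. A \<omega> $$ (i, j)) \<in> borel_measurable M"
  shows "(\<lambda>\<omega>. G k (A \<omega>) z) \<in> borel_measurable M"
  unfolding G_def
proof (intro borel_measurable_sum borel_measurable_times borel_measurable_const borel_measurable_prod borel_measurable_diff)
  fix p i assume p: "p \<in> {p. p permutes {0..<k}}" and i: "i \<in> {0..<k}"
  have "p i < k" using p i permutes_in_image by fastforce
  then have "(\<lambda>\<omega>. A \<omega> $$ (i, p i)) \<in> borel_measurable M" using assms i by auto
  then show "(\<lambda>\<omega>. complex_of_real (A \<omega> $$ (i, p i))) \<in> borel_measurable M" by measurable
qed



lemma entry_carrier: "entry_matrix k E m \<omega> \<in> carrier_mat k k"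
  by (simp add: entry_matrix_def)

lemma entry_prod_Suc:
  assumes "i < k" "j < k"
  shows "prod_matrix k (\<lambda>m. entry_matrix k E m \<omega>) (Suc n) $$ (i, j) =
    (\<Sum>l\<in>{0..<k}. prod_matrix k (\<lambda>m. entry_matrix k E m \<omega>) n $$ (i, l) * E (Suc n) l j \<omega>)"
proof -
  have P: "prod_matrix k (\<lambda>m. entry_matrix k E m \<omega>) n \<in> carrier_mat k k"
    by (rule prod_carrier) (rule entry_carrier)
  show ?thesis using P assms
    by (auto simp: scalar_prod_def entry_matrix_def intro!: sum.cong)
qed

lemma entries_measurable:
  assumes rv: "\<And>m i j. m \<ge> 1 \<Longrightarrow> i < k \<Longrightarrow> j < k \<Longrightarrow> E m i j \<in> borel_measurable M"
  shows "i < k \<Longrightarrow> j < k \<Longrightarrow>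
    (\<lambda>\<omega>. prod_matrix k (\<lambda>m. entry_matrix k E m \<omega>) n $$ (i, j)) \<in> borel_measurable M"
proof (induction n arbitrary: i j)
  case 0 then show ?case by simp
next
  case (Suc n)
  have "(\<lambda>\<omega>. \<Sum>l\<in>{0..<k}. prod_matrix k (\<lambda>m. entry_matrix k E m \<omega>) n $$ (i, l) * E (Suc n) l j \<omega>)
     \<in> borel_measurable M"
    using Suc rv by (intro borel_measurable_sum borel_measurable_times) auto
  moreover have "(\<lambda>\<omega>. prod_matrix k (\<lambda>m. entry_matrix k E m \<omega>) (Suc n) $$ (i, j)) =
    (\<lambda>\<omega>. \<Sum>l\<in>{0..<k}. prod_matrix k (\<lambda>m. entry_matrix k E m \<omega>) n $$ (i, l) * E (Suc n) l j \<omega>)"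
    using Suc.prems by (intro ext entry_prod_Suc)
  ultimately show ?case by simp
qed



theorem mainTheorem18:
  fixes \<mu> :: "real measure" and M :: "'w measure" and k :: nat
    and E :: "nat \<Rightarrow> nat \<Rightarrow> nat \<Rightarrow> 'w \<Rightarrow> real"
  assumes "prob_space \<mu>" and "sets \<mu> = sets borel"
    and "\<exists>x. measure \<mu> {x} > 0"
    and "prob_space M"
    and "k \<ge> 1"
    and "prob_space.indep_vars M (\<lambda>_. borel) (\<lambda>(m, i, j). E m i j) ({1..} \<times> {..<k} \<times> {..<k})"
    and "\<And>m i j. m \<ge> 1 \<Longrightarrow> i < k \<Longrightarrow> j < k \<Longrightarrow> distr M borel (E m i j) = \<mu>"
  shows "(\<lambda>n. measure M {\<omega> \<in> space M.
            all_eigenvalues_real (prod_matrix k (\<lambda>m. entry_matrix k E m \<omega>) n)})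
         \<longlonglongrightarrow> 1"
proof -
  interpret M: prob_space M by fact
  interpret mu: prob_space \<mu> by fact
  note ind = assms(6)
  define I where "I = ({1..} \<times> {..<k} \<times> {..<k} :: (nat \<times> nat \<times> nat) set)"
  define Xv where "Xv = (\<lambda>(m, i, j). E m i j)"
  have indI: "M.indep_vars (\<lambda>_. borel) Xv I" using ind by (simp add: I_def Xv_def)
  have rvX: "Xv t \<in> borel_measurable M" if "t \<in> I" for t
    using indI that unfolding M.indep_vars_def by auto
  have rv: "E m i j \<in> borel_measurable M" if "m \<ge> 1" "i < k" "j < k" for m i j
    using rvX[of "(m, i, j)"] that by (simp add: I_def Xv_def)
  obtain x where x: "measure \<mu> {x} > 0" using assms(3) by blast
  define q where "q = measure \<mu> {x}"
  define p where "p = q ^ (k * k)"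
  have q0: "q > 0" using x by (simp add: q_def)
  have q1: "q \<le> 1" unfolding q_def by (rule mu.prob_le_1)
  have p0: "p > 0" using q0 by (simp add: p_def)
  have p1: "p \<le> 1" using q0 q1 by (simp add: p_def power_le_one)
  define A where "A n \<omega> = prod_matrix k (\<lambda>m. entry_matrix k E m \<omega>) n" for n \<omega>
  define S where "S n = {\<omega> \<in> space M. all_eigenvalues_real (A n \<omega>)}" for n
  define K where "K m = ({m} \<times> {..<k} \<times> {..<k} :: (nat \<times> nat \<times> nat) set)" for m
  define B where "B m = (\<Inter>t\<in>K m. Xv t -` {x} \<inter> space M)" for m
  define C where "C m = space M - B m" for m

  have Acar: "A n \<omega> \<in> carrier_mat k k" for n \<omega>
    unfolding A_def by (rule prod_carrier) (rule entry_carrier)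
  have S_meas: "S n \<in> sets M" for n
  proof -
    have Am: "(\<lambda>\<omega>. A n \<omega> $$ (i, j)) \<in> borel_measurable M" if "i < k" "j < k" for i j
      unfolding A_def using entries_measurable[of k E M, OF rv] that by blast
    have Gm[measurable]: "(\<lambda>\<omega>. G k (A n \<omega>) z) \<in> borel_measurable M" for z
      by (rule meas_G) (rule Am)
    have "S n = space M - {\<omega> \<in> space M. \<exists>N::nat. \<forall>j::nat. \<exists>q::rat\<times>rat.
       inK N (cq q) \<and> norm (G k (A n \<omega>) (cq q)) < 1 / real (Suc j)}"
    proof -
      have "\<not> all_eigenvalues_real (A n \<omega>) \<longleftrightarrow> (\<exists>z. Im z \<noteq> 0 \<and> G k (A n \<omega>) z = 0)" for \<omega>
        unfolding all_eigenvalues_real_def eig_iff_G[OF Acar] complex_is_Real_iff by blast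
      then show ?thesis unfolding S_def nonreal_root_iff[OF cont_G] by blast
    qed
    also have "\<dots> \<in> sets M" by measurable
    finally show ?thesis .
  qed

  have KI: "K m \<subseteq> I" if "m \<ge> 1" for m using that by (auto simp: K_def I_def)
  have gen_ind: "M.indep_sets (\<lambda>t. sigma_sets (space M) {Xv t -` A \<inter> space M |A. A \<in> sets borel}) I"
    using indI unfolding M.indep_vars_def by auto
  have pX: "M.prob (Xv t -` {x} \<inter> space M) = q" if tI: "t \<in> I" for t
  proof -
    obtain m i j where t: "t = (m, i, j)" "m \<ge> 1" "i < k" "j < k" using tI unfolding I_def by (cases t) auto
    have "M.prob (Xv t -` {x} \<inter> space M) = measure (distr M borel (Xv t)) {x}"
      using rvX[OF tI] by (simp add: measure_distr)
    also have "distr M borel (Xv t) = \<mu>" using assms(7)[of m i j] t by (simp add: Xv_def)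
    finally show ?thesis by (simp add: q_def)
  qed
  have "0 \<in> {..<k}" using \<open>k \<ge> 1\<close> by simp
  then have kne: "{..<k} \<noteq> {}" by blast
  have Kne: "K m \<noteq> {}" "finite (K m)" for m using kne by (simp_all add: K_def)
  have Xev: "Xv t -` {x} \<inter> space M \<in> sets M" if "t \<in> I" for t
    using measurable_sets[OF rvX[OF that], of "{x}"] by simp
  have genmem: "Xv t -` {x} \<inter> space M \<in> sigma_sets (space M) {Xv t -` A \<inter> space M |A. A \<in> sets borel}" for t
    by (rule sigma_sets.Basic, rule CollectI, rule exI[of _ "{x}"]) simp
  have Bev: "B m \<in> sets M" if "m \<ge> 1" for m
    unfolding B_def using KI[OF that] Kne
    by (intro sets.finite_INT Xev) auto
  have pB: "M.prob (B m) = p" if "m \<ge> 1" for m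
  proof -
    have "M.prob (B m) = (\<Prod>t\<in>K m. M.prob (Xv t -` {x} \<inter> space M))"
      unfolding B_def
      by (rule M.indep_setsD[OF gen_ind KI[OF that]]) (simp_all add: Kne genmem)
    also have "\<dots> = (\<Prod>t\<in>K m. q)" using KI[OF that] pX by (intro prod.cong) auto
    also have "\<dots> = p" by (simp add: K_def p_def card_cartesian_product)
    finally show ?thesis .
  qed

  define Gen where "Gen t = {Xv t -` A \<inter> space M |A. A \<in> sets borel}" for t
  have indC: "M.indep_sets (\<lambda>m. sigma_sets (space M) (\<Union>t\<in>K m. Gen t)) {1..}"
  proof (rule M.indep_sets_collect_sigma)
    have "(\<Union>m\<in>{1..}. K m) = I" by (auto simp: K_def I_def)
    then show "M.indep_sets Gen (\<Union>m\<in>{1..}. K m)"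
      using indI unfolding M.indep_vars_def2 Gen_def by simp
    show "Int_stable (Gen t)" for t
      unfolding Gen_def Int_stable_def
      apply auto
      apply (rule_tac x="A \<inter> Aa" in exI)
      apply auto
      done
    show "disjoint_family_on K {1..}" by (auto simp: disjoint_family_on_def K_def)
  qed
  have C_in: "C m \<in> sigma_sets (space M) (\<Union>t\<in>K m. Gen t)" if "m \<ge> 1" for m
  proof -
    have sub: "(\<Union>t\<in>K m. Gen t) \<subseteq> Pow (space M)" by (auto simp: Gen_def)
    interpret sa: sigma_algebra "space M" "sigma_sets (space M) (\<Union>t\<in>K m. Gen t)"
      using sub by (rule sigma_algebra_sigma_sets)
    have "B m \<in> sigma_sets (space M) (\<Union>t\<in>K m. Gen t)"
      unfolding B_def
    proof (rule sa.finite_INT)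
      show "finite (K m)" "K m \<noteq> {}" using Kne by auto
      fix t assume "t \<in> K m"
      have "Xv t -` {x} \<inter> space M \<in> Gen t" unfolding Gen_def
        by (rule CollectI, rule exI[of _ "{x}"]) simp
      then have "Xv t -` {x} \<inter> space M \<in> (\<Union>t\<in>K m. Gen t)" using \<open>t \<in> K m\<close> by (rule UN_I[rotated])
      then show "Xv t -` {x} \<inter> space M \<in> sigma_sets (space M) (\<Union>t\<in>K m. Gen t)" by (rule sigma_sets.Basic)
    qed
    then show ?thesis unfolding C_def by (rule sigma_sets.Compl)
  qed
  have pC: "M.prob (\<Inter>m\<in>{1..n}. C m) = (1 - p) ^ n" if "n \<ge> 1" for n
  proof -
    have "M.prob (\<Inter>m\<in>{1..n}. C m) = (\<Prod>m\<in>{1..n}. M.prob (C m))"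
      by (rule M.indep_setsD[OF indC]) (use that C_in in simp_all)
    also have "\<dots> = (\<Prod>m\<in>{1..n}. 1 - p)"
      by (intro prod.cong) (auto simp: C_def M.prob_compl Bev pB)
    finally show ?thesis by simp
  qed

  have lower: "1 - (1 - p) ^ n \<le> M.prob (S n)" if n1: "n \<ge> 1" for n
  proof -
    have Cev: "(\<Inter>m\<in>{1..n}. C m) \<in> sets M" using that Bev
      by (intro sets.finite_INT) (auto simp: C_def)
    have "space M - (\<Inter>m\<in>{1..n}. C m) \<subseteq> S n"
    proof
      fix \<omega> assume \<omega>: "\<omega> \<in> space M - (\<Inter>m\<in>{1..n}. C m)"
      then obtain m where m: "m \<in> {1..n}" "\<omega> \<in> B m" using n1 by (auto simp: C_def)
      have Ex: "E m i j \<omega> = x" if "i < k" "j < k" for i j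
      proof -
        have "\<omega> \<in> Xv (m, i, j) -` {x} \<inter> space M" using m(2) unfolding B_def
          by (rule INT_D) (simp add: K_def that)
        then show ?thesis by (simp add: Xv_def)
      qed
      have "entry_matrix k E m \<omega> = mat k k (\<lambda>_. x)"
        by (intro eq_matI) (auto simp: entry_matrix_def Ex)
      then have "all_eigenvalues_real (A n \<omega>)" unfolding A_def
        using m(1) by (intro all_real_of_const_factor[of _ k m n x]) (auto simp: entry_carrier)
      then show "\<omega> \<in> S n" using \<omega> by (simp add: S_def)
    qed
    then have "M.prob (space M - (\<Inter>m\<in>{1..n}. C m)) \<le> M.prob (S n)"
      using S_meas by (intro M.finite_measure_mono) auto
    then show ?thesis using M.prob_compl[OF Cev] pC[OF that] by simp
  qed
  have lim: "(\<lambda>n. 1 - (1 - p) ^ n) \<longlonglongrightarrow> 1"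
  proof -
    have "norm (1 - p) < 1" using p0 p1 by simp
    then have "(\<lambda>n. (1 - p) ^ n) \<longlonglongrightarrow> 0" by (rule LIMSEQ_power_zero)
    then show ?thesis using tendsto_diff[OF tendsto_const[of 1]] by fastforce
  qed
  have "(\<lambda>n. M.prob (S n)) \<longlonglongrightarrow> 1"
  proof (rule tendsto_sandwich[OF _ _ lim tendsto_const])
    show "\<forall>\<^sub>F n in sequentially. 1 - (1 - p) ^ n \<le> M.prob (S n)"
      using lower eventually_sequentially by blast
    show "\<forall>\<^sub>F n in sequentially. M.prob (S n) \<le> 1" by (simp add: M.prob_le_1)
  qed
  then show ?thesis by (simp add: S_def A_def)
qed


end
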